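(* In the algebra $\widehat{\mathcal R}(x)$ of non-associative formal power series without constant term in one variable $x$, the unique series $X$ with $\exp X=1+x$ is $$\log(1+x)=\sum_{\tau}\frac{B_\tau}{\tau!}\,\tau,$$ the sum running over all non-associative monomials $\tau$ in $x$.
   Context: $k$ is a field of characteristic $0$. $\widehat{\mathcal R}(x)$ consists of formal (infinite) linear combinations of non-associative monomials (rooted binary plane trees) in $x$ of degree $\ge1$, with the non-associative product extended bilinearly; $1+\widehat{\mathcal R}(x)$ lies in its unital completion. For $X\in\widehat{\mathcal R}(x)$, $\exp X=1+X+\frac{X^2}{2!}+\frac{X^2X}{3!}+\frac{(X^2X)X}{4!}+\cdots=\sum_{n\ge0}\frac{X^n}{n!}$ with left-normed powers $X^n=((XX)\cdots)X$. Bernoulli numbers $B_k$ are defined by $B_0=1$ and $\sum_{k=0}^{n-1}\frac{B_k}{k!(n-k)!}=0$ for $n\ge2$ (so $B_1=-1/2$). For a monomial $\tau$: if $\tau=x$ set $B_\tau=1$, $\tau!=1$; otherwise $\tau$ can be written uniquely as $(\cdots((x\tau_1)\tau_2)\cdots)\tau_k$ with $k\ge1$ and monomials $\tau_i$, and one sets $B_\tau=B_kB_{\tau_1}\cdots B_{\tau_k}$ and $\tau!=k!\,\tau_1!\cdots\tau_k!$. *)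

theory Defs
  imports Complex_Main
begin

text \<open>Non-associative monomials in one variable x: rooted binary plane trees.
  Leaf is the monomial x; Node a b is the product a b.\<close>
datatype nmono = X | Mul nmono nmono

fun deg :: "nmono \<Rightarrow> nat" where
  "deg X = 1"
| "deg (Mul a b) = deg a + deg b"

text \<open>Elements of the completed algebra without constant term: coefficient functions.\<close>
type_synonym 'k nseries = "nmono \<Rightarrow> 'k"

definition xser :: "'k::field nseries" where
  "xser t = (if t = X then 1 else 0)"

text \<open>Bilinear extension of the product: the monomial Mul a b arises only from a times b.\<close>
fun nmult :: "'k::field nseries \<Rightarrow> 'k nseries \<Rightarrow> 'k nseries" where
  "nmult F G X = 0"
| "nmult F G (Mul a b) = F a * G b"

fun npow :: "'k::field nseries \<Rightarrow> nat \<Rightarrow> 'k nseries" where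
  "npow F 0 = (\<lambda>_. 0)"
| "npow F (Suc 0) = F"
| "npow F (Suc (Suc n)) = nmult (npow F (Suc n)) F"

text \<open>exp F - 1 = sum over n \<ge> 1 of F^n / n!. The coefficient of t in F^n vanishes for n > deg t,
  so the formal infinite sum is computed coefficientwise by a finite sum.\<close>
definition nexpm1 :: "'k::field_char_0 nseries \<Rightarrow> 'k nseries" where
  "nexpm1 F t = (\<Sum>n\<in>{1..deg t}. npow F n t / fact n)"

text \<open>Bernoulli numbers: B_0 = 1 and sum_{k=0}^{n-1} B_k/(k!(n-k)!) = 0 for n \<ge> 2,
  i.e. (solving the relation for n+1) B_n = - n! * sum_{k<n} B_k / (k! (n+1-k)!).\<close>
fun bern :: "nat \<Rightarrow> 'k::field_char_0" where
  "bern n = (if n = 0 then 1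
             else - fact n * (\<Sum>k<n. bern k / (fact k * fact (n + 1 - k))))"

text \<open>Length k of the left spine: t = (...((x t_1) t_2)...) t_k.\<close>
fun spine_len :: "nmono \<Rightarrow> nat" where
  "spine_len X = 0"
| "spine_len (Mul a b) = Suc (spine_len a)"

text \<open>Product of B_{t_i} over the spine factors t_i; B_x = 1, B_t = B_k * prod B_{t_i}.\<close>
fun bprod :: "nmono \<Rightarrow> 'k::field_char_0" where
  "bprod X = 1"
| "bprod (Mul a b) = bprod a * (if b = X then 1 else bern (spine_len b) * bprod b)"

definition Btree :: "nmono \<Rightarrow> 'k::field_char_0" where
  "Btree t = (if t = X then 1 else bern (spine_len t) * bprod t)"

text \<open>Product of t_i! over the spine factors; x! = 1, t! = k! * prod t_i!.\<close>
fun fprod :: "nmono \<Rightarrow> nat" where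
  "fprod X = 1"
| "fprod (Mul a b) = fprod a * (if b = X then 1 else fact (spine_len b) * fprod b)"

definition tfact :: "nmono \<Rightarrow> nat" where
  "tfact t = (if t = X then 1 else fact (spine_len t) * fprod t)"

definition logser :: "'k::field_char_0 nseries" where
  "logser t = Btree t / of_nat (tfact t)"

end

theory Submission
  imports Defs
begin

declare bern.simps [simp del]

lemma deg_pos: "deg t \<ge> 1"
  by (induction t) auto

lemma spine_lt_deg: "spine_len t < deg t"
  by (induction t) (auto simp: deg_pos)

lemma fprod_pos: "fprod t > 0"
  by (induction t) auto

lemma bern_rec: "n > 0 \<Longrightarrow> (bern n :: 'k::field_char_0) =
   - fact n * (\<Sum>k<n. bern k / (fact k * fact (n + 1 - k)))"
  by (subst bern.simps) simp

lemma bern0: "bern 0 = 1"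
  by (subst bern.simps) simp

fun qprod :: "nmono \<Rightarrow> 'k::field_char_0" where
  "qprod X = 1"
| "qprod (Mul a b) = qprod a * logser b"

lemma bprod_fprod: "(bprod t :: 'k::field_char_0) / of_nat (fprod t) = qprod t"
proof (induction t)
  case X
  then show ?case by simp
next
  case (Mul a b)
  have "logser b = (if b = X then 1 else bern (spine_len b) * bprod b) / (of_nat (if b = X then 1 else fact (spine_len b) * fprod b) :: 'k)"
    unfolding logser_def Btree_def tfact_def by simp
  then show ?case using Mul fprod_pos[of a]
    by (simp add: field_simps)
qed

lemma logser_eq: "(logser t :: 'k::field_char_0) = bern (spine_len t) / fact (spine_len t) * qprod t"
proof -
  have "logser t = (bern (spine_len t) * bprod t) / (fact (spine_len t) * of_nat (fprod t) :: 'k)"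
  proof -
    have a: "of_nat (tfact t) = (fact (spine_len t) * of_nat (fprod t) :: 'k)"
      by (cases t) (simp_all add: tfact_def del: fact_Suc)
    have b: "Btree t = (bern (spine_len t) * bprod t :: 'k)"
      by (cases t) (simp_all add: Btree_def bern0)
    show ?thesis unfolding logser_def a b ..
  qed
  also have "\<dots> = bern (spine_len t) / fact (spine_len t) * (bprod t / of_nat (fprod t))"
    by simp
  finally show ?thesis by (simp add: bprod_fprod)
qed

lemma npow_logser: "n \<ge> 1 \<Longrightarrow> (npow logser n t :: 'k::field_char_0) =
   (if n \<le> spine_len t + 1 then bern (spine_len t + 1 - n) / fact (spine_len t + 1 - n) * qprod t else 0)"
proof (induction t arbitrary: n)
  case X
  then show ?case
  proof (cases n)
    case (Suc m) then show ?thesis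
      by (cases m) (auto simp: logser_eq bern0)
  qed auto
next
  case (Mul a b)
  then show ?case
  proof (cases n)
    case (Suc m) note nm = this
    then show ?thesis
    proof (cases m)
      case 0 then show ?thesis using nm by (simp add: logser_eq)
    next
      case (Suc p)
      have "npow logser n (Mul a b) = npow logser (Suc p) a * (logser b :: 'k)"
        using nm Suc by simp
      also have "\<dots> = (if Suc p \<le> spine_len a + 1 then bern (spine_len a + 1 - Suc p) / fact (spine_len a + 1 - Suc p) * qprod a else 0) * logser b"
        using Mul.IH(1)[of "Suc p"] by simp
      finally show ?thesis using nm Suc by auto
    qed
  qed auto
qed

lemma exist: "nexpm1 (logser :: 'k::field_char_0 nseries) = xser"
proof
  fix t
  define k where "k = spine_len t"
  have kd: "k + 1 \<le> deg t" using spine_lt_deg[of t] k_def by simp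
  have "nexpm1 logser t = (\<Sum>n\<in>{1..deg t}. npow logser n t / fact n :: 'k)"
    by (simp add: nexpm1_def)
  also have "\<dots> = (\<Sum>n\<in>{1..k+1}. npow logser n t / fact n)"
    by (rule sum.mono_neutral_right) (use kd in \<open>auto simp: npow_logser k_def\<close>)
  also have "\<dots> = (\<Sum>n\<in>{1..k+1}. bern (k + 1 - n) / (fact (k + 1 - n) * fact n)) * qprod t"
  proof -
    have "(\<Sum>n\<in>{1..k+1}. npow logser n t / fact n :: 'k) = (\<Sum>n\<in>{1..k+1}. bern (k + 1 - n) / (fact (k + 1 - n) * fact n) * (qprod t :: 'k))"
      by (rule sum.cong) (auto simp: npow_logser k_def)
    then show ?thesis by (simp only: sum_distrib_right)
  qed
  also have "(\<Sum>n\<in>{1..k+1}. bern (k + 1 - n) / (fact (k + 1 - n) * fact n) :: 'k)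
      = (\<Sum>j\<in>{0..k}. bern j / (fact j * fact (k + 1 - j)))"
    by (rule sum.reindex_bij_witness[where i="\<lambda>j. k + 1 - j" and j="\<lambda>n. k + 1 - n"]) auto
  finally have e: "nexpm1 logser t = (\<Sum>j\<in>{0..k}. bern j / (fact j * fact (k + 1 - j)) :: 'k) * qprod t" .
  show "nexpm1 logser t = (xser t :: 'k)"
  proof (cases t)
    case X
    then show ?thesis using e by (simp add: k_def xser_def bern0)
  next
    case (Mul a b)
    then have k0: "k > 0" by (simp add: k_def)
    have "(\<Sum>j\<in>{0..k}. bern j / (fact j * fact (k + 1 - j)) :: 'k)
       = (\<Sum>j<k. bern j / (fact j * fact (k + 1 - j))) + bern k / fact k"
      by (simp add: atLeast0AtMost lessThan_Suc_atMost[symmetric])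
    also have "bern k / fact k = - (\<Sum>j<k. bern j / (fact j * fact (k + 1 - j)) :: 'k)"
      using bern_rec[OF k0, where 'k='k] by simp
    finally show ?thesis using e Mul by (simp add: xser_def)
  qed
qed

lemma npow_agree: "(\<And>s. deg s \<le> deg t \<Longrightarrow> F s = G s) \<Longrightarrow> npow F n t = npow G n t"
proof (induction F n arbitrary: t rule: npow.induct)
  case (3 F n)
  show ?case
  proof (cases t)
    case (Mul a b)
    have "npow F (Suc n) a = npow G (Suc n) a"
      by (rule "3.IH") (use "3.prems" Mul deg_pos[of b] in auto)
    moreover have "F b = G b" using "3.prems" Mul deg_pos[of a] by auto
    ultimately show ?thesis using Mul by simp
  qed simp
qed auto

lemma unique: "nexpm1 F = nexpm1 (G :: 'k::field_char_0 nseries) \<Longrightarrow> F = G"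
proof
  assume eq: "nexpm1 F = nexpm1 G"
  fix t
  show "F t = G t"
  proof (induction "deg t" arbitrary: t rule: less_induct)
    case less
    have IH: "F s = G s" if "deg s < deg t" for s using less.hyps that by blast
    have rest: "npow F n t = npow G n t" if "n \<ge> 2" for n
    proof -
      have "n = Suc (Suc (n - 2))" using that by simp
      then obtain m where m: "n = Suc (Suc m)" by blast
      show ?thesis
      proof (cases t)
        case X
        then show ?thesis using m by simp
      next
        case (Mul a b)
        have "npow F (Suc m) a = npow G (Suc m) a"
        proof (rule npow_agree)
          fix s assume "deg s \<le> deg a"
          then have "deg s < deg t" using Mul deg_pos[of b] by simp
          then show "F s = G s" by (rule IH)
        qed
        moreover have "F b = G b" by (rule IH) (use Mul deg_pos[of a] in simp)
        ultimately show ?thesis using Mul m by simp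
      qed
    qed
    have d: "1 \<le> deg t" by (rule deg_pos)
    have "nexpm1 F t = F t + (\<Sum>n\<in>{2..deg t}. npow F n t / fact n)"
      unfolding nexpm1_def by (subst sum.atLeast_Suc_atMost[OF d]) (simp add: numeral_2_eq_2)
    moreover have "nexpm1 G t = G t + (\<Sum>n\<in>{2..deg t}. npow G n t / fact n)"
      unfolding nexpm1_def by (subst sum.atLeast_Suc_atMost[OF d]) (simp add: numeral_2_eq_2)
    moreover have "(\<Sum>n\<in>{2..deg t}. npow F n t / fact n) = (\<Sum>n\<in>{2..deg t}. npow G n t / fact n :: 'k)"
      by (rule sum.cong) (auto simp: rest)
    ultimately show ?case using eq by simp
  qed
qed

theorem mainTheorem18:
  "\<forall>F :: 'k::field_char_0 nseries. nexpm1 F = xser \<longleftrightarrow> F = logser"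
  using exist unique by metis

end
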